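(* For $1\le s<t\le n$ and $1\le s'<t'\le n$ the following are equivalent: (1) $\operatorname{Ext}^1_\Lambda((s,t),(s',t'))\neq0$; (2) $\operatorname{Ext}^1_\Lambda((s',t'),(s,t))\ne0$; (3) the segments $(P_s,P_t)$ and $(P_{s'},P_{t'})$ are crossing diagonals of $P$.
   Context: $K$ a field, $R=K[x]$. $P$ is a polygon with vertices $P_1,\dots,P_n$ labelled counterclockwise; two diagonals cross if they share an interior point. $\Lambda\subset M_n(K(x))$ is the $R$-order with $(i,j)$ entry $x^{c_{ij}}R$, $c_{ij}=0$ for $i\le j$ except $c_{1n}=-1$, $c_{ij}=1$ for $i=j+1$, $c_{ij}=2$ for $i\ge j+2$. For $1\le s<t\le n$, $(s,t)$ is the left $\Lambda$-module of column vectors $[R^{s}\,(x)^{t-s}\,(x^2)^{n-t}]^t\subset K(x)^n$ ($s$ entries in $R$, then $t-s$ in $xR$, then $n-t$ in $x^2R$). *)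

theory Defs
  imports "HOL-Computational_Algebra.Polynomial_Factorial"
begin

text \<open>The field K(x) is realised as the fraction field of K[x] = 'k poly.
  Vectors in K(x)^n: functions on indices 1..n (zero outside).
  Matrices in M_n(K(x)): functions on pairs of indices in 1..n (zero outside).\<close>

type_synonym 'k vec = "nat \<Rightarrow> 'k poly fract"
type_synonym 'k mat = "nat \<Rightarrow> nat \<Rightarrow> 'k poly fract"

definition xpow :: "int \<Rightarrow> 'k::field poly fract" where
  "xpow c = (to_fract [:0, 1:]) powi c"

definition inxR :: "int \<Rightarrow> 'k::field poly fract \<Rightarrow> bool" where
  "inxR c f \<longleftrightarrow> (\<exists>p. f = to_fract p * xpow c)"

definition cexp :: "nat \<Rightarrow> nat \<Rightarrow> nat \<Rightarrow> int" where
  "cexp n i j = (if i \<le> j then (if i = 1 \<and> j = n then -1 else 0)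
                 else if i = j + 1 then 1 else 2)"

definition Lambda :: "nat \<Rightarrow> 'k::field mat set" where
  "Lambda n = {A. (\<forall>i j. A i j \<noteq> 0 \<longrightarrow> i \<in> {1..n} \<and> j \<in> {1..n}) \<and>
                  (\<forall>i\<in>{1..n}. \<forall>j\<in>{1..n}. inxR (cexp n i j) (A i j))}"

definition madd :: "'k::field mat \<Rightarrow> 'k mat \<Rightarrow> 'k mat" where
  "madd A B = (\<lambda>i j. A i j + B i j)"

definition mmul :: "nat \<Rightarrow> 'k::field mat \<Rightarrow> 'k mat \<Rightarrow> 'k mat" where
  "mmul n A B = (\<lambda>i j. \<Sum>k=1..n. A i k * B k j)"

definition mone :: "nat \<Rightarrow> 'k::field mat" where
  "mone n = (\<lambda>i j. if i = j \<and> i \<in> {1..n} then 1 else 0)"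

definition mvec :: "nat \<Rightarrow> 'k::field mat \<Rightarrow> 'k vec \<Rightarrow> 'k vec" where
  "mvec n A v = (\<lambda>i. \<Sum>j=1..n. A i j * v j)"

record ('a, 's) lmod =
  lcarrier :: "'a set"
  ladd :: "'a \<Rightarrow> 'a \<Rightarrow> 'a"
  lzero :: 'a
  lact :: "'s \<Rightarrow> 'a \<Rightarrow> 'a"

definition is_lmod :: "nat \<Rightarrow> ('a, 'k::field mat) lmod \<Rightarrow> bool" where
  "is_lmod n M \<longleftrightarrow>
     (let C = lcarrier M; ad = ladd M; z = lzero M; ac = lact M in
      (\<forall>a\<in>C. \<forall>b\<in>C. ad a b \<in> C) \<and> z \<in> C \<and>
      (\<forall>a\<in>C. \<forall>b\<in>C. \<forall>c\<in>C. ad (ad a b) c = ad a (ad b c)) \<and>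
      (\<forall>a\<in>C. \<forall>b\<in>C. ad a b = ad b a) \<and>
      (\<forall>a\<in>C. ad z a = a) \<and>
      (\<forall>a\<in>C. \<exists>b\<in>C. ad a b = z) \<and>
      (\<forall>A\<in>Lambda n. \<forall>a\<in>C. ac A a \<in> C) \<and>
      (\<forall>A\<in>Lambda n. \<forall>a\<in>C. \<forall>b\<in>C. ac A (ad a b) = ad (ac A a) (ac A b)) \<and>
      (\<forall>A\<in>Lambda n. \<forall>B\<in>Lambda n. \<forall>a\<in>C. ac (madd A B) a = ad (ac A a) (ac B a)) \<and>
      (\<forall>A\<in>Lambda n. \<forall>B\<in>Lambda n. \<forall>a\<in>C. ac (mmul n A B) a = ac A (ac B a)) \<and>
      (\<forall>a\<in>C. ac (mone n) a = a))"

definition lhom :: "nat \<Rightarrow> ('a, 'k::field mat) lmod \<Rightarrow> ('b, 'k mat) lmod \<Rightarrow> ('a \<Rightarrow> 'b) \<Rightarrow> bool" where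
  "lhom n M N f \<longleftrightarrow>
     (\<forall>a\<in>lcarrier M. f a \<in> lcarrier N) \<and>
     (\<forall>a\<in>lcarrier M. \<forall>b\<in>lcarrier M. f (ladd M a b) = ladd N (f a) (f b)) \<and>
     (\<forall>A\<in>Lambda n. \<forall>a\<in>lcarrier M. f (lact M A a) = lact N A (f a))"

text \<open>Ext^1_Lambda(M,N) \<noteq> 0 (Yoneda): there is a non-split short exact sequence
  0 \<rightarrow> N \<rightarrow> E \<rightarrow> M \<rightarrow> 0 of left Lambda-modules.  Since any such E is in bijection
  with N \<times> M as a set, it is no loss of generality to take the carrier of E
  inside the type of pairs.\<close>
definition ext1_nonzero :: "nat \<Rightarrow> ('a, 'k::field mat) lmod \<Rightarrow> ('b, 'k mat) lmod \<Rightarrow> bool" where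
  "ext1_nonzero n M N \<longleftrightarrow>
     (\<exists>(E :: ('b \<times> 'a, 'k mat) lmod) i p.
        is_lmod n E \<and>
        lhom n N E i \<and> inj_on i (lcarrier N) \<and>
        lhom n E M p \<and> p ` lcarrier E = lcarrier M \<and>
        i ` lcarrier N = {e \<in> lcarrier E. p e = lzero M} \<and>
        \<not> (\<exists>\<sigma>. lhom n M E \<sigma> \<and> (\<forall>m\<in>lcarrier M. p (\<sigma> m) = m)))"

definition dexp :: "nat \<Rightarrow> nat \<Rightarrow> nat \<Rightarrow> int" where
  "dexp s t i = (if i \<le> s then 0 else if i \<le> t then 1 else 2)"

text \<open>the Lambda-lattice (s,t) = [R^s (x)^(t-s) (x^2)^(n-t)]^t\<close>
definition lattice_st :: "nat \<Rightarrow> nat \<Rightarrow> nat \<Rightarrow> 'k::field vec set" where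
  "lattice_st n s t = {v. (\<forall>i. i \<notin> {1..n} \<longrightarrow> v i = 0) \<and>
                          (\<forall>i\<in>{1..n}. inxR (dexp s t i) (v i))}"

definition lat_mod :: "nat \<Rightarrow> nat \<Rightarrow> nat \<Rightarrow> ('k::field vec, 'k mat) lmod" where
  "lat_mod n s t = \<lparr>lcarrier = lattice_st n s t, ladd = (\<lambda>u v i. u i + v i),
                    lzero = (\<lambda>i. 0), lact = mvec n\<rparr>"

text \<open>Diagonals of the polygon P_1..P_n (labelled counterclockwise, convex position):
  (P_s,P_t), s<t, is a diagonal iff the vertices are not adjacent; two diagonals
  cross (share a point interior to P) iff their endpoints strictly interleave.\<close>
definition is_diagonal :: "nat \<Rightarrow> nat \<Rightarrow> nat \<Rightarrow> bool" where
  "is_diagonal n s t \<longleftrightarrow> 1 \<le> s \<and> s < t \<and> t \<le> n \<and> t \<noteq> s + 1 \<and> \<not> (s = 1 \<and> t = n)"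

definition crossing_diagonals :: "nat \<Rightarrow> nat \<Rightarrow> nat \<Rightarrow> nat \<Rightarrow> nat \<Rightarrow> bool" where
  "crossing_diagonals n s t s' t' \<longleftrightarrow>
     is_diagonal n s t \<and> is_diagonal n s' t' \<and>
     ((s < s' \<and> s' < t \<and> t < t') \<or> (s' < s \<and> s < t' \<and> t' < t))"

end

theory Submission
  imports Defs
begin


lemma to_fract_pow: "to_fract (p ^ m) = (to_fract p) ^ m"
  by (induction m) auto

lemma xpow_add: "xpow (a + b) = (xpow a * xpow b :: 'k::field poly fract)"
  unfolding xpow_def by (simp add: power_int_add)

lemma xpow_nz[simp]: "xpow a \<noteq> (0 :: 'k::field poly fract)"
  unfolding xpow_def by simp

lemma xpow_0[simp]: "xpow 0 = (1 :: 'k::field poly fract)"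
  unfolding xpow_def by simp

lemma xpow_nat: "xpow (int m) = (to_fract ([:0,1:] ^ m) :: 'k::field poly fract)"
  unfolding xpow_def by (simp add: to_fract_pow)

lemma inxR_mono: assumes "inxR c (f::'k::field poly fract)" "d \<le> c" shows "inxR d f"
proof -
  obtain p where p: "f = to_fract p * xpow c" using assms unfolding inxR_def by auto
  have "xpow c = xpow (c - d) * (xpow d :: 'k poly fract)" using xpow_add[of "c-d" d] by simp
  also have "xpow (c - d) = (to_fract ([:0,1:] ^ nat (c-d)) :: 'k poly fract)"
    using xpow_nat[of "nat (c-d)"] assms(2) by simp
  finally have "f = to_fract (p * [:0,1:] ^ nat (c-d)) * xpow d" using p by (simp add: mult.assoc)
  thus ?thesis unfolding inxR_def by blast
qed

lemma inxR_0[simp]: "inxR c (0::'k::field poly fract)"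
  unfolding inxR_def by (rule exI[of _ 0]) simp

lemma inxR_add: "inxR c f \<Longrightarrow> inxR c g \<Longrightarrow> inxR c (f + g :: 'k::field poly fract)"
  unfolding inxR_def by (metis distrib_right to_fract_add)

lemma inxR_uminus: "inxR c f \<Longrightarrow> inxR c (- f :: 'k::field poly fract)"
  unfolding inxR_def by (metis mult_minus_left to_fract_uminus)

lemma inxR_diff: "inxR c f \<Longrightarrow> inxR c g \<Longrightarrow> inxR c (f - g :: 'k::field poly fract)"
  using inxR_add[of c f "-g"] inxR_uminus[of c g] by simp

lemma inxR_mult: "inxR c f \<Longrightarrow> inxR d g \<Longrightarrow> inxR (c + d) (f * g :: 'k::field poly fract)"
  unfolding inxR_def xpow_add
  by (metis (no_types, opaque_lifting) mult.assoc mult.left_commute to_fract_mult)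

lemma inxR_poly: "inxR 0 (to_fract p :: 'k::field poly fract)"
  unfolding inxR_def by auto

lemma inxR_1: "inxR 0 (1 :: 'k::field poly fract)"
  using inxR_poly[of 1] by simp

lemma inxR_xpow: "inxR c (xpow c :: 'k::field poly fract)"
  unfolding inxR_def by (rule exI[of _ 1]) simp

lemma inxR_shift: "inxR (c + d) (f * xpow d) \<longleftrightarrow> inxR c (f :: 'k::field poly fract)"
proof
  assume "inxR (c + d) (f * xpow d)"
  then obtain p where "f * xpow d = to_fract p * xpow c * xpow d" unfolding inxR_def xpow_add by auto
  hence "f = to_fract p * xpow c" by simp
  thus "inxR c f" unfolding inxR_def by blast
next
  assume "inxR c f" thus "inxR (c + d) (f * xpow d)" using inxR_mult[OF _ inxR_xpow] by blast
qed

lemma not_inxR: "\<not> inxR (k + 1) (xpow k :: 'k::field poly fract)"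
proof
  assume "inxR (k + 1) (xpow k :: 'k poly fract)"
  hence "inxR (1 + k) (1 * xpow k :: 'k poly fract)" by (simp add: add.commute)
  hence "inxR 1 (1 :: 'k poly fract)" using inxR_shift by blast
  then obtain p where "(1::'k poly fract) = to_fract p * to_fract [:0,1:]"
    unfolding inxR_def xpow_def by auto
  hence "(1 :: 'k poly) = p * [:0,1:]" by (metis to_fract_1 to_fract_eq_iff to_fract_mult)
  hence "poly (1 :: 'k poly) 0 = poly (p * [:0,1:]) 0" by simp
  thus False by simp
qed




definition sm :: "nat \<Rightarrow> nat \<Rightarrow> 'k::field poly fract \<Rightarrow> 'k mat" where
  "sm j k f = (\<lambda>i l. if i = j \<and> l = k then f else 0)"
definition sv :: "nat \<Rightarrow> 'k::field poly fract \<Rightarrow> 'k vec" where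
  "sv j f = (\<lambda>i. if i = j then f else 0)"
definition Cs :: "nat \<Rightarrow> 'k::field vec \<Rightarrow> 'k mat" where
  "Cs k u = (\<lambda>i l. if l = k then u i else 0)"
definition sc :: "'k::field poly fract \<Rightarrow> 'k vec \<Rightarrow> 'k vec" where
  "sc f u = (\<lambda>i. f * u i)"
definition vsupp :: "nat \<Rightarrow> 'k::field vec \<Rightarrow> bool" where
  "vsupp n u \<longleftrightarrow> (\<forall>i. i \<notin> {1..n} \<longrightarrow> u i = 0)"

lemma cexp_tri: "2 \<le> n \<Longrightarrow> i \<in> {1..n} \<Longrightarrow> j \<in> {1..n} \<Longrightarrow> k \<in> {1..n} \<Longrightarrow>
   cexp n i j \<le> cexp n i k + cexp n k j"
  unfolding cexp_def by auto

lemma dexp_tri: "1 \<le> s \<Longrightarrow> s < t \<Longrightarrow> t \<le> n \<Longrightarrow> i \<in> {1..n} \<Longrightarrow> j \<in> {1..n} \<Longrightarrow>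
   dexp s t i \<le> cexp n i j + dexp s t j"
  unfolding cexp_def dexp_def by auto

lemma if_mult0: "(if P then a else 0) * (b::'a::semiring_0) = (if P then a * b else 0)"
  by simp

lemma sum_delta_nat: "(k::nat) \<in> {1..n} \<Longrightarrow> (\<Sum>j=1..n. if j = k then g j else 0) = (g k :: 'a::comm_monoid_add)"
proof -
  assume "k \<in> {1..n}"
  moreover have "(\<Sum>j\<in>{1..n}. if j = k then g j else 0) = (if k \<in> {1..n} then g k else 0)"
    by (rule sum.delta) simp
  ultimately show ?thesis by simp
qed

lemma inxR_sum: "finite S \<Longrightarrow> (\<And>k. k \<in> S \<Longrightarrow> inxR c (f k)) \<Longrightarrow> inxR c (sum f S :: 'k::field poly fract)"
  by (induction S rule: finite_induct) (auto intro: inxR_add)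

lemma LambdaD: "A \<in> Lambda n \<Longrightarrow> i \<in> {1..n} \<Longrightarrow> j \<in> {1..n} \<Longrightarrow> inxR (cexp n i j) (A i j)"
  unfolding Lambda_def by auto
lemma LambdaD0: "A \<in> Lambda n \<Longrightarrow> i \<notin> {1..n} \<or> j \<notin> {1..n} \<Longrightarrow> A i j = 0"
  unfolding Lambda_def by auto

lemma mmul_Lambda: assumes "2 \<le> n" "A \<in> Lambda n" "B \<in> Lambda n" shows "mmul n A B \<in> Lambda n"
proof -
  have 1: "i \<in> {1..n} \<and> j \<in> {1..n}" if "mmul n A B i j \<noteq> 0" for i j
  proof -
    have "(\<Sum>k=1..n. A i k * B k j) \<noteq> 0" using that by (simp add: mmul_def)
    then obtain k where "k \<in> {1..n}" "A i k * B k j \<noteq> 0"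
      by (rule sum.not_neutral_contains_not_neutral)
    thus ?thesis using assms LambdaD0 by (metis mult_eq_0_iff)
  qed
  have 2: "inxR (cexp n i j) (mmul n A B i j)" if ij: "i \<in> {1..n}" "j \<in> {1..n}" for i j
    unfolding mmul_def
  proof (rule inxR_sum, simp)
    fix k assume k: "k \<in> {1..n}"
    have "inxR (cexp n i k + cexp n k j) (A i k * B k j)"
      using LambdaD[OF assms(2) ij(1) k] LambdaD[OF assms(3) k ij(2)] by (rule inxR_mult)
    thus "inxR (cexp n i j) (A i k * B k j)" using inxR_mono cexp_tri[OF assms(1) ij(1) ij(2) k] by blast
  qed
  show ?thesis unfolding Lambda_def using 1 2 by blast
qed

lemma Cs_Lambda: assumes "k \<in> {1..n}"
  shows "Cs k u \<in> Lambda n \<longleftrightarrow> vsupp n u \<and> (\<forall>i\<in>{1..n}. inxR (cexp n i k) (u i))"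
  using assms unfolding Lambda_def Cs_def vsupp_def by (auto split: if_splits)

lemma sm_Lambda: "j \<in> {1..n} \<Longrightarrow> k \<in> {1..n} \<Longrightarrow> inxR (cexp n j k) f \<Longrightarrow> sm j k f \<in> Lambda n"
  unfolding Lambda_def sm_def by auto

lemma mvec_sm: "k \<in> {1..n} \<Longrightarrow> mvec n (sm j k f) v = sv j (f * v k)"
  unfolding mvec_def sm_def sv_def by (auto simp: fun_eq_iff if_mult0 sum_delta_nat)

lemma mvec_Cs: "k \<in> {1..n} \<Longrightarrow> mvec n (Cs k u) v = sc (v k) u"
proof -
  assume k: "k \<in> {1..n}"
  have "(\<Sum>j=1..n. (if j = k then u i else 0) * v j) = v k * u i" for i
  proof -
    have "(\<Sum>j=1..n. (if j = k then u i else 0) * v j) = (\<Sum>j=1..n. if j = k then u i * v j else 0)"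
      by (rule sum.cong) auto
    also have "\<dots> = u i * v k" by (rule sum_delta_nat[OF k])
    finally show ?thesis by (simp add: mult.commute)
  qed
  thus ?thesis unfolding mvec_def Cs_def sc_def by (simp add: fun_eq_iff)
qed

lemma mmul_Cs: "mmul n B (Cs k u) = Cs k (mvec n B u)"
  unfolding mmul_def Cs_def mvec_def by (auto simp: fun_eq_iff)

lemma mvec_add: "mvec n A (\<lambda>i. u i + v i) = (\<lambda>i. mvec n A u i + mvec n A v i)"
  unfolding mvec_def by (simp add: distrib_left sum.distrib)

lemma mvec_uminus: "mvec n A (\<lambda>i. - u i) = (\<lambda>i. - mvec n A u i)"
  unfolding mvec_def by (simp add: sum_negf)

lemma mvec_diff: "mvec n A (\<lambda>i. u i - v i) = (\<lambda>i. mvec n A u i - mvec n A v i)"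
  unfolding mvec_def by (simp add: right_diff_distrib sum_subtractf)

lemma mvec_sc: "mvec n A (sc f u) = sc f (mvec n A u)"
  unfolding mvec_def sc_def by (simp add: sum_distrib_left mult.left_commute)

lemma mvec_madd: "mvec n (madd A B) v = (\<lambda>i. mvec n A v i + mvec n B v i)"
  unfolding mvec_def madd_def by (simp add: distrib_right sum.distrib)

lemma mvec_mmul: "mvec n (mmul n A B) v = mvec n A (mvec n B v)"
  unfolding mvec_def mmul_def
  by (auto simp: fun_eq_iff sum_distrib_left sum_distrib_right mult.assoc intro: sum.swap)

lemma mvec_mone: "vsupp n v \<Longrightarrow> mvec n (mone n) v = v"
proof -
  have *: "(\<Sum>j=1..n. (if i = j \<and> i \<in> {1..n} then 1 else 0) * v j) = v i" if "vsupp n v" for i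
  proof (cases "i \<in> {1..n}")
    case True
    have "(\<Sum>j=1..n. (if i = j \<and> i \<in> {1..n} then 1 else 0) * v j) = (\<Sum>j=1..n. if j = i then v j else 0)"
      by (rule sum.cong) auto
    thus ?thesis using True sum_delta_nat by simp
  next
    case False thus ?thesis using that unfolding vsupp_def by (auto intro!: sum.neutral)
  qed
  show "vsupp n v \<Longrightarrow> mvec n (mone n) v = v" unfolding mvec_def mone_def by (intro ext) (rule *)
qed

lemma mvec_zero: "mvec n A (\<lambda>i. 0) = (\<lambda>i. 0)"
  unfolding mvec_def by simp

lemma mvec_vsupp: "A \<in> Lambda n \<Longrightarrow> vsupp n (mvec n A v)"
proof -
  assume A: "A \<in> Lambda n"
  have "mvec n A v i = 0" if "i \<notin> {1..n}" for i
    unfolding mvec_def using LambdaD0[OF A, of i] that by simp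
  thus ?thesis unfolding vsupp_def by blast
qed

lemma lattice_stD: "v \<in> lattice_st n s t \<Longrightarrow> vsupp n v \<and> (\<forall>i\<in>{1..n}. inxR (dexp s t i) (v i))"
  unfolding lattice_st_def vsupp_def by auto

lemma lattice_stI: "vsupp n v \<Longrightarrow> (\<And>i. i\<in>{1..n} \<Longrightarrow> inxR (dexp s t i) (v i)) \<Longrightarrow> v \<in> lattice_st n s t"
  unfolding lattice_st_def vsupp_def by auto

lemma lattice_mvec: assumes "1 \<le> s" "s < t" "t \<le> n" "A \<in> Lambda n" "v \<in> lattice_st n s t"
  shows "mvec n A v \<in> lattice_st n s t"
proof (rule lattice_stI)
  show "vsupp n (mvec n A v)" using mvec_vsupp assms by blast
  fix i assume i: "i \<in> {1..n}"
  show "inxR (dexp s t i) (mvec n A v i)" unfolding mvec_def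
  proof (rule inxR_sum, simp)
    fix j assume j: "j \<in> {1..n}"
    have "inxR (cexp n i j + dexp s t j) (A i j * v j)"
      using LambdaD[OF assms(4) i j] lattice_stD[OF assms(5)] j by (blast intro: inxR_mult)
    thus "inxR (dexp s t i) (A i j * v j)" using inxR_mono dexp_tri[OF assms(1,2,3) i j] by blast
  qed
qed

lemma lattice_add: "u \<in> lattice_st n s t \<Longrightarrow> v \<in> lattice_st n s t \<Longrightarrow> (\<lambda>i. u i + v i) \<in> lattice_st n s t"
  unfolding lattice_st_def by (auto intro: inxR_add)
lemma lattice_uminus: "u \<in> lattice_st n s t \<Longrightarrow> (\<lambda>i. - u i) \<in> lattice_st n s t"
  unfolding lattice_st_def by (auto intro: inxR_uminus)
lemma lattice_diff: "u \<in> lattice_st n s t \<Longrightarrow> v \<in> lattice_st n s t \<Longrightarrow> (\<lambda>i. u i - v i) \<in> lattice_st n s t"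
  unfolding lattice_st_def by (auto intro: inxR_diff)
lemma lattice_zero: "(\<lambda>i. 0) \<in> lattice_st n s t"
  unfolding lattice_st_def by auto




lemma scalar_lemma:
  fixes L :: "'k::field vec set" and \<phi> :: "'k vec \<Rightarrow> 'k vec" and e :: "nat \<Rightarrow> int"
  assumes n: "1 \<le> n"
    and Lsupp: "\<And>u. u \<in> L \<Longrightarrow> vsupp n u"
    and stab: "\<And>B u. B \<in> Lambda n \<Longrightarrow> u \<in> L \<Longrightarrow> mvec n B u \<in> L"
    and gen: "\<And>j. j \<in> {1..n} \<Longrightarrow> sv j (xpow (e j)) \<in> L"
    and memb: "\<And>u j. u \<in> L \<Longrightarrow> j \<in> {1..n} \<Longrightarrow> inxR (e j) (u j)"
    and eqv: "\<And>B u. B \<in> Lambda n \<Longrightarrow> u \<in> L \<Longrightarrow> \<phi> (mvec n B u) = mvec n B (\<phi> u)"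
    and phisupp: "\<And>u. u \<in> L \<Longrightarrow> vsupp n (\<phi> u)"
  shows "\<exists>h. \<forall>u\<in>L. \<phi> u = sc h u"
proof -
  define g where "g j = sv j (xpow (e j) :: 'k poly fract)" for j
  define hh where "hh j = \<phi> (g j) j / xpow (e j)" for j
  have cjj: "inxR (cexp n j j) (to_fract p :: 'k poly fract)" for j p
    using inxR_mono[OF inxR_poly] unfolding cexp_def by auto
  have step1: "\<phi> u j = hh j * u j" if u: "u \<in> L" and j: "j \<in> {1..n}" for u j
  proof -
    obtain p where p: "u j = to_fract p * xpow (e j)" using memb[OF u j] unfolding inxR_def by auto
    have "inxR (cexp n j j) (1::'k poly fract)" using cjj[of j 1] by simp
    hence B1: "sm j j (1::'k poly fract) \<in> Lambda n" by (rule sm_Lambda[OF j j])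
    have Bp: "sm j j (to_fract p) \<in> Lambda n" using sm_Lambda[OF j j cjj] .
    have e1: "mvec n (sm j j 1) u = mvec n (sm j j (to_fract p)) (g j)"
      using j p by (simp add: mvec_sm g_def sv_def)
    have "\<phi> u j = mvec n (sm j j 1) (\<phi> u) j" using j by (simp add: mvec_sm sv_def)
    also have "\<dots> = \<phi> (mvec n (sm j j 1) u) j" using eqv[OF B1 u] by simp
    also have "\<dots> = \<phi> (mvec n (sm j j (to_fract p)) (g j)) j" using e1 by simp
    also have "\<dots> = mvec n (sm j j (to_fract p)) (\<phi> (g j)) j" using eqv[OF Bp gen[OF j]] g_def by simp
    also have "\<dots> = to_fract p * \<phi> (g j) j" using j by (simp add: mvec_sm sv_def)
    also have "\<dots> = hh j * u j" unfolding hh_def p by simp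
    finally show ?thesis .
  qed
  have step2: "hh j = hh 1" if j: "j \<in> {1..n}" for j
  proof -
    have one: "(1::nat) \<in> {1..n}" using n by simp
    define c where "c = cexp n 1 j"
    have B: "sm 1 j (xpow c) \<in> Lambda n" using sm_Lambda[OF one j] inxR_xpow c_def by blast
    define v where "v = mvec n (sm 1 j (xpow c)) (g j)"
    have vL: "v \<in> L" unfolding v_def g_def using stab[OF B gen[OF j]] .
    have v1: "v 1 = xpow c * xpow (e j)" unfolding v_def g_def using j by (simp add: mvec_sm sv_def)
    have "\<phi> v 1 = mvec n (sm 1 j (xpow c)) (\<phi> (g j)) 1" unfolding v_def using eqv[OF B gen[OF j]] g_def by simp
    also have "\<dots> = xpow c * \<phi> (g j) j" using j by (simp add: mvec_sm sv_def)
    also have "\<phi> (g j) j = hh j * xpow (e j)" unfolding hh_def by simp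
    finally have "\<phi> v 1 = xpow c * (hh j * xpow (e j))" .
    moreover have "\<phi> v 1 = hh 1 * v 1" using step1[OF vL one] .
    ultimately have "xpow c * xpow (e j) * hh j = xpow c * xpow (e j) * hh 1" using v1 by (simp add: ac_simps)
    thus ?thesis by simp
  qed
  have "\<forall>u\<in>L. \<phi> u = sc (hh 1) u"
  proof
    fix u assume u: "u \<in> L"
    show "\<phi> u = sc (hh 1) u"
    proof
      fix i show "\<phi> u i = sc (hh 1) u i"
      proof (cases "i \<in> {1..n}")
        case True thus ?thesis using step1[OF u True] step2[OF True] by (simp add: sc_def)
      next
        case False thus ?thesis using phisupp[OF u] Lsupp[OF u] by (simp add: sc_def vsupp_def)
      qed
    qed
  qed
  thus ?thesis by blast
qed




definition ilv :: "nat \<Rightarrow> nat \<Rightarrow> nat \<Rightarrow> nat \<Rightarrow> bool" where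
  "ilv s t s' t' \<longleftrightarrow> (s < s' \<and> s' < t \<and> t < t') \<or> (s' < s \<and> s < t' \<and> t' < t)"

definition Om :: "nat \<Rightarrow> nat \<Rightarrow> nat \<Rightarrow> nat \<Rightarrow> int" where
  "Om n s t i = max (cexp n i s) (cexp n i t + 1)"

lemma Om_s1: "1 \<le> s \<Longrightarrow> s < t \<Longrightarrow> t \<le> n \<Longrightarrow> Om n s t (s+1) = 1"
  unfolding Om_def cexp_def by auto
lemma Om_t1: "1 \<le> s \<Longrightarrow> s < t \<Longrightarrow> t < n \<Longrightarrow> Om n s t (t+1) = 2"
  unfolding Om_def cexp_def by auto
lemma Om_1: "1 \<le> s \<Longrightarrow> s < t \<Longrightarrow> t = n \<Longrightarrow> Om n s t 1 = 0"
  unfolding Om_def cexp_def by auto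

lemma combA:
  assumes "1 \<le> s" "s < t" "t \<le> n" "1 \<le> s'" "s' < t'" "t' \<le> n" "\<not> ilv s t s' t'"
  shows "\<exists>i0\<in>{1..n}. dexp s' t' i0 - Om n s t i0 \<ge> dexp s' t' s \<or>
                      dexp s' t' i0 - Om n s t i0 \<ge> dexp s' t' t - 1"
proof (cases "t < n")
  case True
  have "dexp s' t' (s+1) - 1 \<ge> dexp s' t' s \<or> dexp s' t' (s+1) - 1 \<ge> dexp s' t' t - 1 \<or>
        dexp s' t' (t+1) - 2 \<ge> dexp s' t' s \<or> dexp s' t' (t+1) - 2 \<ge> dexp s' t' t - 1"
    using assms True unfolding ilv_def dexp_def by auto
  moreover have "s + 1 \<in> {1..n}" "t + 1 \<in> {1..n}" using assms True by auto
  ultimately show ?thesis using Om_s1 Om_t1 assms True by metis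
next
  case False
  hence tn: "t = n" using assms by simp
  have "dexp s' t' (s+1) - 1 \<ge> dexp s' t' s \<or> dexp s' t' (s+1) - 1 \<ge> dexp s' t' t - 1 \<or>
        dexp s' t' 1 \<ge> dexp s' t' s \<or> dexp s' t' 1 \<ge> dexp s' t' t - 1"
    using assms tn unfolding ilv_def dexp_def by auto
  moreover have "s + 1 \<in> {1..n}" "(1::nat) \<in> {1..n}" using assms by auto
  ultimately show ?thesis using Om_s1 Om_1[OF assms(1,2) tn] assms by (metis diff_zero)
qed

lemma combB:
  assumes "1 \<le> s" "s < t" "t \<le> n" "1 \<le> s'" "s' < t'" "t' \<le> n" "ilv s t s' t'" "i \<in> {1..n}"
  shows "min (dexp s' t' s) (dexp s' t' t - 1) - 1 + cexp n i s \<ge> dexp s' t' i \<or>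
         min (dexp s' t' s) (dexp s' t' t - 1) - 1 + cexp n i t + 1 \<ge> dexp s' t' i"
proof (cases "s < s' \<and> s' < t \<and> t < t'")
  case True
  hence "dexp s' t' s = 0" "dexp s' t' t = 1" unfolding dexp_def by auto
  moreover have "cexp n i s \<ge> dexp s' t' i + 1 \<or> cexp n i t + 1 \<ge> dexp s' t' i + 1"
    using True assms unfolding cexp_def dexp_def by auto
  ultimately show ?thesis by auto
next
  case False
  hence F: "s' < s \<and> s < t' \<and> t' < t" using assms(7) ilv_def by auto
  hence "dexp s' t' s = 1" "dexp s' t' t = 2" unfolding dexp_def by auto
  moreover have "cexp n i s \<ge> dexp s' t' i \<or> cexp n i t + 1 \<ge> dexp s' t' i"
    using F assms unfolding cexp_def dexp_def by auto
  ultimately show ?thesis by auto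
qed



definition P1 :: "nat \<Rightarrow> nat \<Rightarrow> 'k::field vec set" where
  "P1 n s = {u. Cs s u \<in> Lambda n}"
definition P2 :: "nat \<Rightarrow> nat \<Rightarrow> 'k::field vec set" where
  "P2 n t = {w. Cs t (sc (xpow (-1)) w) \<in> Lambda n}"

definition dA :: "nat \<Rightarrow> nat \<Rightarrow> 'k::field vec \<Rightarrow> 'k vec" where
  "dA s t m = (\<lambda>i. if s < i \<and> i \<le> t then 0 else m i)"
definition dW :: "nat \<Rightarrow> nat \<Rightarrow> 'k::field vec \<Rightarrow> 'k vec" where
  "dW s t m = (\<lambda>i. if s < i \<and> i \<le> t then m i else 0)"

lemma P1_iff: "s \<in> {1..n} \<Longrightarrow> u \<in> P1 n s \<longleftrightarrow> vsupp n u \<and> (\<forall>i\<in>{1..n}. inxR (cexp n i s) (u i))"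
  unfolding P1_def using Cs_Lambda by blast

lemma inxR_xinv: "inxR c (xpow (-1) * f) \<longleftrightarrow> inxR (c + 1) (f :: 'k::field poly fract)"
  using inxR_shift[of "c + 1" "-1" f] by (simp add: mult.commute)

lemma P2_iff: "t \<in> {1..n} \<Longrightarrow> w \<in> P2 n t \<longleftrightarrow> vsupp n w \<and> (\<forall>i\<in>{1..n}. inxR (cexp n i t + 1) (w i))"
  unfolding P2_def using Cs_Lambda[of t n "sc (xpow (-1)) w"]
  by (simp add: sc_def vsupp_def inxR_xinv)

lemma vsupp_add: "vsupp n u \<Longrightarrow> vsupp n v \<Longrightarrow> vsupp n (\<lambda>i. u i + v i)"
  unfolding vsupp_def by auto
lemma vsupp_diff: "vsupp n u \<Longrightarrow> vsupp n v \<Longrightarrow> vsupp n (\<lambda>i. u i - v i)"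
  unfolding vsupp_def by auto
lemma vsupp_uminus: "vsupp n u \<Longrightarrow> vsupp n (\<lambda>i. - u i)"
  unfolding vsupp_def by auto
lemma vsupp_sc: "vsupp n u \<Longrightarrow> vsupp n (sc f u)"
  unfolding vsupp_def sc_def by auto
lemma vsupp_zero: "vsupp n (\<lambda>i. 0)"
  unfolding vsupp_def by auto
lemma vsupp_sv: "j \<in> {1..n} \<Longrightarrow> vsupp n (sv j f)"
  unfolding vsupp_def sv_def by auto

lemma P1_add: "s \<in> {1..n} \<Longrightarrow> u \<in> P1 n s \<Longrightarrow> v \<in> P1 n s \<Longrightarrow> (\<lambda>i. u i + v i) \<in> P1 n s"
  by (simp add: P1_iff vsupp_add inxR_add)
lemma P1_diff: "s \<in> {1..n} \<Longrightarrow> u \<in> P1 n s \<Longrightarrow> v \<in> P1 n s \<Longrightarrow> (\<lambda>i. u i - v i) \<in> P1 n s"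
  by (simp add: P1_iff vsupp_diff inxR_diff)
lemma P1_uminus: "s \<in> {1..n} \<Longrightarrow> u \<in> P1 n s \<Longrightarrow> (\<lambda>i. - u i) \<in> P1 n s"
  by (simp add: P1_iff vsupp_uminus inxR_uminus)
lemma P1_zero: "s \<in> {1..n} \<Longrightarrow> (\<lambda>i. 0) \<in> P1 n s"
  by (simp add: P1_iff vsupp_zero)
lemma P2_add: "t \<in> {1..n} \<Longrightarrow> u \<in> P2 n t \<Longrightarrow> v \<in> P2 n t \<Longrightarrow> (\<lambda>i. u i + v i) \<in> P2 n t"
  by (simp add: P2_iff vsupp_add inxR_add)
lemma P2_diff: "t \<in> {1..n} \<Longrightarrow> u \<in> P2 n t \<Longrightarrow> v \<in> P2 n t \<Longrightarrow> (\<lambda>i. u i - v i) \<in> P2 n t"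
  by (simp add: P2_iff vsupp_diff inxR_diff)
lemma P2_uminus: "t \<in> {1..n} \<Longrightarrow> u \<in> P2 n t \<Longrightarrow> (\<lambda>i. - u i) \<in> P2 n t"
  by (simp add: P2_iff vsupp_uminus inxR_uminus)
lemma P2_zero: "t \<in> {1..n} \<Longrightarrow> (\<lambda>i. 0) \<in> P2 n t"
  by (simp add: P2_iff vsupp_zero)

lemma P1_mvec: "2 \<le> n \<Longrightarrow> B \<in> Lambda n \<Longrightarrow> u \<in> P1 n s \<Longrightarrow> mvec n B u \<in> P1 n s"
  unfolding P1_def using mmul_Lambda mmul_Cs by (metis mem_Collect_eq)
lemma P2_mvec: "2 \<le> n \<Longrightarrow> B \<in> Lambda n \<Longrightarrow> u \<in> P2 n t \<Longrightarrow> mvec n B u \<in> P2 n t"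
  unfolding P2_def using mmul_Lambda mmul_Cs mvec_sc by (metis mem_Collect_eq)

lemma cexp_ss: "s \<in> {1..n} \<Longrightarrow> 2 \<le> n \<Longrightarrow> cexp n s s = 0"
  unfolding cexp_def by auto

lemma sv_s_P1: "2 \<le> n \<Longrightarrow> s \<in> {1..n} \<Longrightarrow> sv s 1 \<in> P1 n s"
proof -
  assume a: "2 \<le> n" "s \<in> {1..n}"
  have "vsupp n (sv s (1::'k::field poly fract))" by (rule vsupp_sv[OF a(2)])
  thus ?thesis using a by (auto simp: P1_iff sv_def cexp_ss inxR_1)
qed

lemma sv_t_P2: "2 \<le> n \<Longrightarrow> t \<in> {1..n} \<Longrightarrow> sv t (xpow 1) \<in> P2 n t"
proof -
  assume a: "2 \<le> n" "t \<in> {1..n}"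
  have "vsupp n (sv t (xpow 1::'k::field poly fract))" by (rule vsupp_sv[OF a(2)])
  thus ?thesis using a inxR_xpow[of 1] by (auto simp: P2_iff sv_def cexp_ss)
qed

lemma P1_lat: assumes "1 \<le> s" "s < t" "t \<le> n" "u \<in> P1 n s" shows "u \<in> lattice_st n s t"
proof (rule lattice_stI)
  have s: "s \<in> {1..n}" using assms by auto
  show "vsupp n u" using assms(4) P1_iff[OF s] by auto
  fix i assume i: "i \<in> {1..n}"
  have "dexp s t i \<le> cexp n i s" using assms i unfolding dexp_def cexp_def by auto
  thus "inxR (dexp s t i) (u i)" using assms(4) P1_iff[OF s] i inxR_mono by blast
qed

lemma P2_lat: assumes "1 \<le> s" "s < t" "t \<le> n" "u \<in> P2 n t" shows "u \<in> lattice_st n s t"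
proof (rule lattice_stI)
  have t: "t \<in> {1..n}" using assms by auto
  show "vsupp n u" using assms(4) P2_iff[OF t] by auto
  fix i assume i: "i \<in> {1..n}"
  have "dexp s t i \<le> cexp n i t + 1" using assms i unfolding dexp_def cexp_def by auto
  thus "inxR (dexp s t i) (u i)" using assms(4) P2_iff[OF t] i inxR_mono by blast
qed

lemma dA_P1: assumes "1 \<le> s" "s < t" "t \<le> n" "m \<in> lattice_st n s t" shows "dA s t m \<in> P1 n s"
proof -
  have s: "s \<in> {1..n}" using assms by auto
  have "inxR (cexp n i s) (dA s t m i)" if i: "i \<in> {1..n}" for i
  proof (cases "s < i \<and> i \<le> t")
    case True thus ?thesis by (simp add: dA_def)
  next
    case False
    hence "cexp n i s \<le> dexp s t i" using assms i unfolding dexp_def cexp_def by auto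
    moreover have "inxR (dexp s t i) (m i)" using lattice_stD[OF assms(4)] i by blast
    moreover have "dA s t m i = m i" using False unfolding dA_def by auto
    ultimately show ?thesis using inxR_mono by metis
  qed
  moreover have "vsupp n (dA s t m)" using lattice_stD[OF assms(4)] by (simp add: vsupp_def dA_def)
  ultimately show ?thesis using P1_iff[OF s] by blast
qed

lemma dW_P2: assumes "1 \<le> s" "s < t" "t \<le> n" "m \<in> lattice_st n s t" shows "dW s t m \<in> P2 n t"
proof -
  have t: "t \<in> {1..n}" using assms by auto
  have "inxR (cexp n i t + 1) (dW s t m i)" if i: "i \<in> {1..n}" for i
  proof (cases "s < i \<and> i \<le> t")
    case False
    hence "dW s t m i = 0" unfolding dW_def by auto
    thus ?thesis by simp
  next
    case True
    hence "cexp n i t + 1 \<le> dexp s t i" using assms i unfolding dexp_def cexp_def by auto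
    moreover have "inxR (dexp s t i) (m i)" using lattice_stD[OF assms(4)] i by blast
    moreover have "dW s t m i = m i" using True by (simp add: dW_def)
    ultimately show ?thesis using inxR_mono by metis
  qed
  moreover have "vsupp n (dW s t m)" using lattice_stD[OF assms(4)] by (simp add: vsupp_def dW_def)
  ultimately show ?thesis using P2_iff[OF t] by blast
qed

lemma dA_dW: "m = (\<lambda>i. dA s t m i + dW s t m i)"
  unfolding dA_def dW_def by auto

lemma Om_memb: assumes "s \<in> {1..n}" "t \<in> {1..n}" "u \<in> P1 n s" "u \<in> P2 n t" "i \<in> {1..n}"
  shows "inxR (Om n s t i) (u i)"
  using assms P1_iff P2_iff unfolding Om_def by (metis max_def)

lemma Om_gen: assumes "s \<in> {1..n}" "t \<in> {1..n}" "j \<in> {1..n}"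
  shows "sv j (xpow (Om n s t j) :: 'k::field poly fract) \<in> P1 n s \<inter> P2 n t"
proof -
  have "inxR (cexp n j s) (xpow (Om n s t j) :: 'k poly fract)"
       "inxR (cexp n j t + 1) (xpow (Om n s t j) :: 'k poly fract)"
    unfolding Om_def by (auto intro!: inxR_mono[OF inxR_xpow])
  moreover have "vsupp n (sv j (xpow (Om n s t j) :: 'k::field poly fract))" by (rule vsupp_sv[OF assms(3)])
  ultimately show ?thesis using assms by (auto simp: P1_iff P2_iff sv_def)
qed




definition CtB :: "nat \<Rightarrow> 'k::field vec \<Rightarrow> 'k mat" where
  "CtB t u = Cs t (sc (xpow (-1)) u)"

lemma Cs_add: "Cs k (\<lambda>i. u i + v i) = madd (Cs k u) (Cs k v)"
  unfolding Cs_def madd_def by (auto simp: fun_eq_iff)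
lemma CtB_add: "CtB k (\<lambda>i. u i + v i) = madd (CtB k u) (CtB k v)"
  unfolding CtB_def Cs_def madd_def sc_def by (auto simp: fun_eq_iff distrib_left)
lemma mmul_CtB: "mmul n B (CtB t u) = CtB t (mvec n B u)"
  unfolding CtB_def by (simp add: mmul_Cs mvec_sc)
lemma CtB_Lambda: "u \<in> P2 n t \<Longrightarrow> CtB t u \<in> Lambda n"
  unfolding CtB_def P2_def by simp
lemma Cs_Lambda': "u \<in> P1 n s \<Longrightarrow> Cs s u \<in> Lambda n"
  unfolding P1_def by simp
lemma xpow_1_inv: "xpow 1 * (xpow (-1) * f) = (f :: 'k::field poly fract)"
  using xpow_add[of 1 "-1", where 'k='k] by (simp add: mult.assoc[symmetric])
lemma dA_dW_pt: "dA s t m j + dW s t m j = m j" by (simp add: dA_def dW_def)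
lemma dA_dW': "(\<lambda>j. dA s t m j + dW s t m j) = m" by (simp add: dA_dW_pt)

lemma sc_1: "sc 1 u = u" unfolding sc_def by simp

locale extctx =
  fixes n s t s' t' :: nat
    and E :: "('k::field vec \<times> 'k vec, 'k mat) lmod"
    and i :: "'k vec \<Rightarrow> 'k vec \<times> 'k vec"
    and p :: "'k vec \<times> 'k vec \<Rightarrow> 'k vec"
  assumes st: "1 \<le> s" "s < t" "t \<le> n" "1 \<le> s'" "s' < t'" "t' \<le> n"
    and Emod: "is_lmod n E"
    and ihom: "lhom n (lat_mod n s' t') E i"
    and iinj: "inj_on i (lattice_st n s' t')"
    and phom: "lhom n E (lat_mod n s t) p"
    and psurj: "p ` lcarrier E = lattice_st n s t"
    and exact: "i ` lattice_st n s' t' = {e \<in> lcarrier E. p e = (\<lambda>i. 0)}"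
begin

abbreviation "C \<equiv> lcarrier E"
abbreviation pl (infixl "\<oplus>" 65) where "a \<oplus> b \<equiv> ladd E a b"
abbreviation "z \<equiv> lzero E"
abbreviation "ac \<equiv> lact E"
abbreviation "M \<equiv> lattice_st n s t"
abbreviation "N \<equiv> lattice_st n s' t'"

lemma n2: "2 \<le> n" using st by auto
lemma sn: "s \<in> {1..n}" using st by auto
lemma tn: "t \<in> {1..n}" using st by auto

lemma cl: "\<And>a b. a \<in> C \<Longrightarrow> b \<in> C \<Longrightarrow> a \<oplus> b \<in> C"
  using Emod unfolding is_lmod_def Let_def by auto

lemma zC: "z \<in> C"
  using Emod unfolding is_lmod_def Let_def by auto

lemma as: "\<And>a b c. a \<in> C \<Longrightarrow> b \<in> C \<Longrightarrow> c \<in> C \<Longrightarrow> (a \<oplus> b) \<oplus> c = a \<oplus> (b \<oplus> c)"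
  using Emod unfolding is_lmod_def Let_def by auto

lemma cm: "\<And>a b. a \<in> C \<Longrightarrow> b \<in> C \<Longrightarrow> a \<oplus> b = b \<oplus> a"
  using Emod unfolding is_lmod_def Let_def by auto

lemma lz: "\<And>a. a \<in> C \<Longrightarrow> z \<oplus> a = a"
  using Emod unfolding is_lmod_def Let_def by auto

lemma inv: "\<And>a. a \<in> C \<Longrightarrow> \<exists>b\<in>C. a \<oplus> b = z"
  using Emod unfolding is_lmod_def Let_def by auto

lemma acC: "\<And>A a. A \<in> Lambda n \<Longrightarrow> a \<in> C \<Longrightarrow> ac A a \<in> C"
  using Emod unfolding is_lmod_def Let_def by auto

lemma acadd: "\<And>A a b. A \<in> Lambda n \<Longrightarrow> a \<in> C \<Longrightarrow> b \<in> C \<Longrightarrow> ac A (a \<oplus> b) = ac A a \<oplus> ac A b"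
  using Emod unfolding is_lmod_def Let_def by auto

lemma acmadd: "\<And>A B a. A \<in> Lambda n \<Longrightarrow> B \<in> Lambda n \<Longrightarrow> a \<in> C \<Longrightarrow> ac (madd A B) a = ac A a \<oplus> ac B a"
  using Emod unfolding is_lmod_def Let_def by auto

lemma acmmul: "\<And>A B a. A \<in> Lambda n \<Longrightarrow> B \<in> Lambda n \<Longrightarrow> a \<in> C \<Longrightarrow> ac (mmul n A B) a = ac A (ac B a)"
  using Emod unfolding is_lmod_def Let_def by auto

lemma rz: "a \<in> C \<Longrightarrow> a \<oplus> z = a" using cm lz zC by metis

lemma cancel: assumes "a \<in> C" "b \<in> C" "c \<in> C" "a \<oplus> c = b \<oplus> c" shows "a = b"
proof -
  obtain c' where c': "c' \<in> C" "c \<oplus> c' = z" using inv assms by blast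
  have "(a \<oplus> c) \<oplus> c' = (b \<oplus> c) \<oplus> c'" using assms by simp
  thus ?thesis using as assms c' rz by metis
qed

lemma swap4: "a \<in> C \<Longrightarrow> b \<in> C \<Longrightarrow> c \<in> C \<Longrightarrow> d \<in> C \<Longrightarrow> (a \<oplus> b) \<oplus> (c \<oplus> d) = (a \<oplus> c) \<oplus> (b \<oplus> d)"
  by (metis as cm cl)

lemma ifacts:
  shows iC: "\<And>y. y \<in> N \<Longrightarrow> i y \<in> C"
  and iadd: "\<And>y y'. y \<in> N \<Longrightarrow> y' \<in> N \<Longrightarrow> i (\<lambda>j. y j + y' j) = i y \<oplus> i y'"
  and iact: "\<And>B y. B \<in> Lambda n \<Longrightarrow> y \<in> N \<Longrightarrow> i (mvec n B y) = ac B (i y)"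
  using ihom unfolding lhom_def lat_mod_def by auto

lemma pfacts:
  shows pC: "\<And>e. e \<in> C \<Longrightarrow> p e \<in> M"
  and padd: "\<And>e e'. e \<in> C \<Longrightarrow> e' \<in> C \<Longrightarrow> p (e \<oplus> e') = (\<lambda>j. p e j + p e' j)"
  and pact: "\<And>B e. B \<in> Lambda n \<Longrightarrow> e \<in> C \<Longrightarrow> p (ac B e) = mvec n B (p e)"
  using phom unfolding lhom_def lat_mod_def by auto

lemma i0: "i (\<lambda>j. 0) = z"
proof -
  have Z: "(\<lambda>j. 0) \<in> N" by (rule lattice_zero)
  have "i (\<lambda>j. 0) = i (\<lambda>j. (0::'k poly fract) + 0)" by simp
  also have "\<dots> = i (\<lambda>j. 0) \<oplus> i (\<lambda>j. 0)" by (rule iadd[OF Z Z])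
  finally have "i (\<lambda>j. 0) \<oplus> i (\<lambda>j. 0) = z \<oplus> i (\<lambda>j. 0)" using lz[OF iC[OF Z]] by simp
  thus ?thesis using cancel iC[OF Z] zC by blast
qed

lemma pi: "y \<in> N \<Longrightarrow> p (i y) = (\<lambda>j. 0)" using exact by blast
lemma ker: "e \<in> C \<Longrightarrow> p e = (\<lambda>j. 0) \<Longrightarrow> \<exists>y\<in>N. e = i y" using exact by blast

lemma pz: "p z = (\<lambda>j. 0)"
proof -
  have "p z = p (z \<oplus> z)" using lz zC by simp
  also have "\<dots> = (\<lambda>j. p z j + p z j)" using padd zC by simp
  finally have H: "p z = (\<lambda>j. p z j + p z j)" .
  have "p z j = 0" for j using fun_cong[OF H, of j] by (metis add_left_cancel add.right_neutral)
  thus ?thesis by auto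
qed

lemma pneg: assumes "a \<in> C" "b \<in> C" "a \<oplus> b = z" shows "p b = (\<lambda>j. - p a j)"
proof -
  have "(\<lambda>j. p a j + p b j) = (\<lambda>j. 0)" using padd[OF assms(1,2)] assms(3) pz by simp
  thus ?thesis by (auto simp: fun_eq_iff eq_neg_iff_add_eq_0 add.commute)
qed

lemma p_Cs: assumes "u \<in> P1 n s" "e \<in> C" "p e = sv s 1" shows "p (ac (Cs s u) e) = u"
proof -
  have "p (ac (Cs s u) e) = mvec n (Cs s u) (sv s 1)" using pact[OF Cs_Lambda'[OF assms(1)] assms(2)] assms(3) by simp
  also have "\<dots> = sc (sv s 1 s) u" by (rule mvec_Cs[OF sn])
  finally show ?thesis by (simp add: sv_def sc_1)
qed

lemma p_CtB: assumes "u \<in> P2 n t" "e \<in> C" "p e = sv t (xpow 1)" shows "p (ac (CtB t u) e) = u"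
proof -
  have "p (ac (CtB t u) e) = mvec n (CtB t u) (sv t (xpow 1))" using pact[OF CtB_Lambda[OF assms(1)] assms(2)] assms(3) by simp
  also have "\<dots> = sc (sv t (xpow 1) t) (sc (xpow (-1)) u)" unfolding CtB_def by (rule mvec_Cs[OF tn])
  finally show ?thesis by (simp add: sv_def sc_def xpow_1_inv)
qed

lemma split_given:
  assumes e1: "e1 \<in> C" "p e1 = sv s 1" and e2: "e2 \<in> C" "p e2 = sv t (xpow 1)"
    and Z: "\<And>u. u \<in> P1 n s \<Longrightarrow> u \<in> P2 n t \<Longrightarrow> ac (Cs s u) e1 = ac (CtB t u) e2"
  shows "\<exists>\<sigma>. lhom n (lat_mod n s t) E \<sigma> \<and> (\<forall>m\<in>lcarrier (lat_mod n s t). p (\<sigma> m) = m)"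
proof -
  define \<sigma> where "\<sigma> m = ac (Cs s (dA s t m)) e1 \<oplus> ac (CtB t (dW s t m)) e2" for m
  have A: "m \<in> M \<Longrightarrow> dA s t m \<in> P1 n s" for m using dA_P1 st by blast
  have W: "m \<in> M \<Longrightarrow> dW s t m \<in> P2 n t" for m using dW_P2 st by blast
  have LA: "m \<in> M \<Longrightarrow> Cs s (dA s t m) \<in> Lambda n" for m using A Cs_Lambda' by blast
  have LW: "m \<in> M \<Longrightarrow> CtB t (dW s t m) \<in> Lambda n" for m using W CtB_Lambda by blast
  have sC: "m \<in> M \<Longrightarrow> \<sigma> m \<in> C" for m unfolding \<sigma>_def using cl acC LA LW e1 e2 by blast
  have psig: "m \<in> M \<Longrightarrow> p (\<sigma> m) = m" for m
  proof -
    assume m: "m \<in> M"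
    have "p (\<sigma> m) = (\<lambda>j. p (ac (Cs s (dA s t m)) e1) j + p (ac (CtB t (dW s t m)) e2) j)"
      unfolding \<sigma>_def by (rule padd[OF acC[OF LA[OF m] e1(1)] acC[OF LW[OF m] e2(1)]])
    hence "p (\<sigma> m) = (\<lambda>j. dA s t m j + dW s t m j)"
      using p_Cs[OF A[OF m] e1] p_CtB[OF W[OF m] e2] by simp
    thus ?thesis by (simp only: dA_dW')
  qed
  have sadd: "\<sigma> (\<lambda>j. m j + m' j) = \<sigma> m \<oplus> \<sigma> m'" if m: "m \<in> M" "m' \<in> M" for m m'
  proof -
    have 1: "dA s t (\<lambda>j. m j + m' j) = (\<lambda>j. dA s t m j + dA s t m' j)" unfolding dA_def by auto
    have 2: "dW s t (\<lambda>j. m j + m' j) = (\<lambda>j. dW s t m j + dW s t m' j)" unfolding dW_def by auto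
    have "\<sigma> (\<lambda>j. m j + m' j) = (ac (Cs s (dA s t m)) e1 \<oplus> ac (Cs s (dA s t m')) e1) \<oplus>
            (ac (CtB t (dW s t m)) e2 \<oplus> ac (CtB t (dW s t m')) e2)"
      unfolding \<sigma>_def 1 2 Cs_add CtB_add
      using acmadd[OF LA[OF m(1)] LA[OF m(2)] e1(1)] acmadd[OF LW[OF m(1)] LW[OF m(2)] e2(1)] by simp
    also have "\<dots> = \<sigma> m \<oplus> \<sigma> m'" unfolding \<sigma>_def
      by (rule swap4[OF acC[OF LA[OF m(1)] e1(1)] acC[OF LA[OF m(2)] e1(1)] acC[OF LW[OF m(1)] e2(1)] acC[OF LW[OF m(2)] e2(1)]])
    finally show ?thesis .
  qed
  have sact: "\<sigma> (mvec n B m) = ac B (\<sigma> m)" if B: "B \<in> Lambda n" and m: "m \<in> M" for B m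
  proof -
    have Bm: "mvec n B m \<in> M" using lattice_mvec st B m by blast
    define u where "u = (\<lambda>j. dA s t (mvec n B m) j - mvec n B (dA s t m) j)"
    have uP1: "u \<in> P1 n s" unfolding u_def using P1_diff[OF sn A[OF Bm] P1_mvec[OF n2 B A[OF m]]] .
    have BmD: "mvec n B m = (\<lambda>j. mvec n B (dA s t m) j + mvec n B (dW s t m) j)"
    proof -
      have "mvec n B m = mvec n B (\<lambda>j. dA s t m j + dW s t m j)" by (simp only: dA_dW')
      thus ?thesis by (simp only: mvec_add)
    qed
    have u2: "u = (\<lambda>j. mvec n B (dW s t m) j - dW s t (mvec n B m) j)"
    proof
      fix j
      have "mvec n B m j = dA s t (mvec n B m) j + dW s t (mvec n B m) j" by (simp only: dA_dW_pt)
      moreover have "mvec n B m j = mvec n B (dA s t m) j + mvec n B (dW s t m) j" using BmD by metis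
      ultimately show "u j = mvec n B (dW s t m) j - dW s t (mvec n B m) j" unfolding u_def
        by (simp add: algebra_simps)
    qed
    have uP2: "u \<in> P2 n t" unfolding u2 using P2_diff[OF tn P2_mvec[OF n2 B W[OF m]] W[OF Bm]] .
    have r1: "dA s t (mvec n B m) = (\<lambda>j. mvec n B (dA s t m) j + u j)" unfolding u_def by auto
    have r2: "mvec n B (dW s t m) = (\<lambda>j. dW s t (mvec n B m) j + u j)" unfolding u2 by auto
    have LBA: "Cs s (mvec n B (dA s t m)) \<in> Lambda n" using Cs_Lambda' P1_mvec[OF n2 B A[OF m]] .
    have Lu1: "Cs s u \<in> Lambda n" using Cs_Lambda' uP1 .
    have Lu2: "CtB t u \<in> Lambda n" using CtB_Lambda uP2 .
    have LWB: "CtB t (dW s t (mvec n B m)) \<in> Lambda n" using LW[OF Bm] .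
    have "\<sigma> (mvec n B m) = (ac (Cs s (mvec n B (dA s t m))) e1 \<oplus> ac (Cs s u) e1) \<oplus> ac (CtB t (dW s t (mvec n B m))) e2"
      unfolding \<sigma>_def r1 Cs_add using acmadd[OF LBA Lu1 e1(1)] by simp
    also have "\<dots> = ac (Cs s (mvec n B (dA s t m))) e1 \<oplus> (ac (CtB t (dW s t (mvec n B m))) e2 \<oplus> ac (CtB t u) e2)"
      using Z[OF uP1 uP2] as cm acC LBA Lu1 Lu2 LWB e1(1) e2(1) by metis
    also have "\<dots> = ac (Cs s (mvec n B (dA s t m))) e1 \<oplus> ac (CtB t (mvec n B (dW s t m))) e2"
      unfolding r2 CtB_add using acmadd[OF LWB Lu2 e2(1)] by simp
    also have "\<dots> = ac B (\<sigma> m)"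
    proof -
      have c1: "ac (Cs s (mvec n B (dA s t m))) e1 = ac B (ac (Cs s (dA s t m)) e1)"
        using acmmul[OF B LA[OF m] e1(1)] by (simp add: mmul_Cs)
      have c2: "ac (CtB t (mvec n B (dW s t m))) e2 = ac B (ac (CtB t (dW s t m)) e2)"
        using acmmul[OF B LW[OF m] e2(1)] by (simp add: mmul_CtB)
      show ?thesis unfolding \<sigma>_def c1 c2
        by (rule acadd[OF B acC[OF LA[OF m] e1(1)] acC[OF LW[OF m] e2(1)], symmetric])
    qed
    finally show ?thesis .
  qed
  have "lhom n (lat_mod n s t) E \<sigma>" unfolding lhom_def lat_mod_def using sC sadd sact by simp
  moreover have "\<forall>m\<in>lcarrier (lat_mod n s t). p (\<sigma> m) = m" using psig by (simp add: lat_mod_def)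
  ultimately show ?thesis by blast
qed

end



context extctx begin

lemma defect:
  assumes e1: "e1 \<in> C" "p e1 = sv s 1" and e2: "e2 \<in> C" "p e2 = sv t (xpow 1)"
  shows "\<exists>h. \<forall>u. u \<in> P1 n s \<and> u \<in> P2 n t \<longrightarrow>
            sc h u \<in> N \<and> ac (Cs s u) e1 = ac (CtB t u) e2 \<oplus> i (sc h u)"
proof -
  define Q where "Q u y \<longleftrightarrow> y \<in> N \<and> ac (Cs s u) e1 = ac (CtB t u) e2 \<oplus> i y" for u y
  have ex: "\<exists>y. Q u y" if u: "u \<in> P1 n s" "u \<in> P2 n t" for u
  proof -
    define a where "a = ac (Cs s u) e1"
    define b where "b = ac (CtB t u) e2"
    have aC: "a \<in> C" unfolding a_def using acC Cs_Lambda' u e1 by blast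
    have bC: "b \<in> C" unfolding b_def using acC CtB_Lambda u e2 by blast
    obtain b' where b': "b' \<in> C" "b \<oplus> b' = z" using inv bC by blast
    have pa: "p a = u" unfolding a_def using p_Cs u e1 by blast
    have pb: "p b = u" unfolding b_def using p_CtB u e2 by blast
    have "p (a \<oplus> b') = (\<lambda>j. 0)" using padd[OF aC b'(1)] pneg[OF bC b'] pa pb by simp
    then obtain y where y: "y \<in> N" "a \<oplus> b' = i y" using ker cl aC b'(1) by blast
    have "b \<oplus> i y = a" using y b' aC bC as cm rz by metis
    thus ?thesis unfolding Q_def a_def b_def using y by metis
  qed
  have uniq: "y = y'" if u: "u \<in> P2 n t" and Q: "Q u y" "Q u y'" for u y y'
  proof -
    have N: "y \<in> N" "y' \<in> N" using Q Q_def by auto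
    have bC: "ac (CtB t u) e2 \<in> C" using acC CtB_Lambda u e2 by blast
    have "ac (CtB t u) e2 \<oplus> i y = ac (CtB t u) e2 \<oplus> i y'" using Q Q_def by auto
    hence "i y \<oplus> ac (CtB t u) e2 = i y' \<oplus> ac (CtB t u) e2" using cm bC iC N by metis
    hence "i y = i y'" using cancel iC N bC by blast
    thus ?thesis using iinj N inj_on_def by metis
  qed
  define \<phi> where "\<phi> u = (THE y. Q u y)" for u
  have phiQ: "Q u (\<phi> u)" if u: "u \<in> P1 n s" "u \<in> P2 n t" for u
    unfolding \<phi>_def using ex[OF u] uniq[OF u(2)] by (metis theI)
  define L where "L = (P1 n s \<inter> P2 n t :: 'k vec set)"
  have "\<exists>h. \<forall>u\<in>L. \<phi> u = sc h u"
  proof (rule scalar_lemma[where e = "Om n s t"])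
    show "1 \<le> n" using st by simp
    show "vsupp n u" if "u \<in> L" for u using that sn P1_iff unfolding L_def by blast
    show "mvec n B u \<in> L" if "B \<in> Lambda n" "u \<in> L" for B u
      using that P1_mvec P2_mvec n2 unfolding L_def by blast
    show "sv j (xpow (Om n s t j)) \<in> L" if "j \<in> {1..n}" for j
      using Om_gen sn tn that unfolding L_def by blast
    show "inxR (Om n s t j) (u j)" if "u \<in> L" "j \<in> {1..n}" for u j
      using Om_memb sn tn that unfolding L_def by blast
    show "vsupp n (\<phi> u)" if "u \<in> L" for u
      using phiQ that lattice_stD unfolding L_def Q_def by blast
    show "\<phi> (mvec n B u) = mvec n B (\<phi> u)" if B: "B \<in> Lambda n" and uL: "u \<in> L" for B u
    proof -
      have u: "u \<in> P1 n s" "u \<in> P2 n t" using uL L_def by auto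
      have Bu: "mvec n B u \<in> P1 n s" "mvec n B u \<in> P2 n t" using P1_mvec P2_mvec n2 B u by blast+
      obtain y where y: "y = \<phi> u" by blast
      have Qy: "y \<in> N" "ac (Cs s u) e1 = ac (CtB t u) e2 \<oplus> i y" using phiQ[OF u] y Q_def by auto
      have "Q (mvec n B u) (mvec n B y)"
      proof -
        have "mvec n B y \<in> N" using lattice_mvec st B Qy(1) by blast
        moreover have "ac (Cs s (mvec n B u)) e1 = ac (CtB t (mvec n B u)) e2 \<oplus> i (mvec n B y)"
        proof -
          have "ac (Cs s (mvec n B u)) e1 = ac B (ac (Cs s u) e1)"
            using acmmul[OF B Cs_Lambda'[OF u(1)] e1(1)] mmul_Cs by metis
          also have "\<dots> = ac B (ac (CtB t u) e2) \<oplus> ac B (i y)"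
            using Qy(2) acadd[OF B acC[OF CtB_Lambda[OF u(2)] e2(1)] iC[OF Qy(1)]] by simp
          also have "\<dots> = ac (CtB t (mvec n B u)) e2 \<oplus> i (mvec n B y)"
            using acmmul[OF B CtB_Lambda[OF u(2)] e2(1)] mmul_CtB iact[OF B Qy(1)] by metis
          finally show ?thesis .
        qed
        ultimately show ?thesis unfolding Q_def by blast
      qed
      thus ?thesis using uniq[OF Bu(2)] phiQ[OF Bu] y by blast
    qed
  qed
  then obtain h where h: "\<forall>u\<in>L. \<phi> u = sc h u" by blast
  show ?thesis
  proof (rule exI[of _ h], intro allI impI)
    fix u :: "'k vec" assume u: "u \<in> P1 n s \<and> u \<in> P2 n t"
    hence "\<phi> u = sc h u" using h L_def by blast
    thus "sc h u \<in> N \<and> ac (Cs s u) e1 = ac (CtB t u) e2 \<oplus> i (sc h u)"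
      using phiQ u unfolding Q_def by metis
  qed
qed

end



lemma mvec_CtB: "t \<in> {1..n} \<Longrightarrow> mvec n (CtB t u) v = sc (v t) (sc (xpow (-1)) u)"
  unfolding CtB_def by (rule mvec_Cs)

context extctx begin

lemma splitA: assumes nilv: "\<not> ilv s t s' t'"
  shows "\<exists>\<sigma>. lhom n (lat_mod n s t) E \<sigma> \<and> (\<forall>m\<in>lcarrier (lat_mod n s t). p (\<sigma> m) = m)"
proof -
  have m1: "sv s 1 \<in> M" using P1_lat[OF st(1-3) sv_s_P1[OF n2 sn]] .
  have m2: "sv t (xpow 1) \<in> M" using P2_lat[OF st(1-3) sv_t_P2[OF n2 tn]] .
  obtain e1 where e1: "e1 \<in> C" "p e1 = sv s 1" using m1 psurj by (metis imageE)
  obtain e2 where e2: "e2 \<in> C" "p e2 = sv t (xpow 1)" using m2 psurj by (metis imageE)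
  obtain h where h: "\<And>u. u \<in> P1 n s \<Longrightarrow> u \<in> P2 n t \<Longrightarrow>
            sc h u \<in> N \<and> ac (Cs s u) e1 = ac (CtB t u) e2 \<oplus> i (sc h u)"
    using defect[OF e1 e2] by blast
  obtain i0 where i0n: "i0 \<in> {1..n}" and c0: "dexp s' t' i0 - Om n s t i0 \<ge> dexp s' t' s \<or>
                      dexp s' t' i0 - Om n s t i0 \<ge> dexp s' t' t - 1"
    using combA[OF st nilv] by blast
  define u0 where "u0 = sv i0 (xpow (Om n s t i0) :: 'k poly fract)"
  have u0: "u0 \<in> P1 n s" "u0 \<in> P2 n t" using Om_gen[OF sn tn i0n] u0_def by auto
  have "inxR (dexp s' t' i0) (sc h u0 i0)" using lattice_stD[OF conjunct1[OF h[OF u0]]] i0n by blast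
  hence "inxR (dexp s' t' i0 - Om n s t i0 + Om n s t i0) (h * xpow (Om n s t i0))"
    by (simp add: sc_def u0_def sv_def)
  hence hi0: "inxR (dexp s' t' i0 - Om n s t i0) h" using inxR_shift by blast
  have Nmv: "mvec n B y \<in> N" if "B \<in> Lambda n" "y \<in> N" for B y using lattice_mvec st that by blast
  from c0 show ?thesis
  proof
    assume c: "dexp s' t' i0 - Om n s t i0 \<ge> dexp s' t' s"
    hence hs: "inxR (dexp s' t' s) (- h)" using hi0 inxR_mono inxR_uminus by blast
    define y where "y = sv s (- h)"
    have yN: "y \<in> N"
    proof (rule lattice_stI)
      show "vsupp n y" unfolding y_def by (rule vsupp_sv[OF sn])
      show "inxR (dexp s' t' j) (y j)" if "j \<in> {1..n}" for j
        using hs by (simp add: y_def sv_def)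
    qed
    define e1' where "e1' = e1 \<oplus> i y"
    have e1'C: "e1' \<in> C" unfolding e1'_def using cl e1 iC yN by blast
    have pe1': "p e1' = sv s 1" unfolding e1'_def using padd[OF e1(1) iC[OF yN]] pi[OF yN] e1(2) by simp
    have Z: "ac (Cs s u) e1' = ac (CtB t u) e2" if u: "u \<in> P1 n s" "u \<in> P2 n t" for u
    proof -
      have LC: "Cs s u \<in> Lambda n" using Cs_Lambda' u(1) .
      define b where "b = ac (CtB t u) e2"
      have bC: "b \<in> C" unfolding b_def using acC CtB_Lambda u e2 by blast
      have "mvec n (Cs s u) y = sc (y s) u" by (rule mvec_Cs[OF sn])
      hence y2: "mvec n (Cs s u) y = sc (- h) u" by (simp add: y_def sv_def)
      have y2N: "sc (- h) u \<in> N" using Nmv[OF LC yN] y2 by simp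
      have hu: "sc h u \<in> N" using h[OF u] by blast
      have "ac (Cs s u) e1' = ac (Cs s u) e1 \<oplus> i (sc (- h) u)"
        unfolding e1'_def using acadd[OF LC e1(1) iC[OF yN]] iact[OF LC yN] y2 by simp
      also have "\<dots> = (b \<oplus> i (sc h u)) \<oplus> i (sc (- h) u)" using h[OF u] b_def by simp
      also have "\<dots> = b \<oplus> (i (sc h u) \<oplus> i (sc (- h) u))" using as bC iC hu y2N by simp
      also have "i (sc h u) \<oplus> i (sc (- h) u) = i (\<lambda>j. sc h u j + sc (- h) u j)"
        using iadd[OF hu y2N] by simp
      also have "(\<lambda>j. sc h u j + sc (- h) u j) = (\<lambda>j. 0)" by (simp add: sc_def)
      finally show ?thesis using i0 rz bC b_def by simp
    qed
    show ?thesis by (rule split_given[OF e1'C pe1' e2 Z])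
  next
    assume c: "dexp s' t' i0 - Om n s t i0 \<ge> dexp s' t' t - 1"
    hence "inxR (dexp s' t' t - 1) h" using hi0 inxR_mono by blast
    hence "inxR (dexp s' t' t - 1 + 1) (h * xpow 1)" using inxR_shift by blast
    hence ht: "inxR (dexp s' t' t) (h * xpow 1)" by simp
    define y where "y = sv t (h * xpow 1)"
    have yN: "y \<in> N"
    proof (rule lattice_stI)
      show "vsupp n y" unfolding y_def by (rule vsupp_sv[OF tn])
      show "inxR (dexp s' t' j) (y j)" if "j \<in> {1..n}" for j
        using ht by (simp add: y_def sv_def)
    qed
    define e2' where "e2' = e2 \<oplus> i y"
    have e2'C: "e2' \<in> C" unfolding e2'_def using cl e2 iC yN by blast
    have pe2': "p e2' = sv t (xpow 1)" unfolding e2'_def using padd[OF e2(1) iC[OF yN]] pi[OF yN] e2(2) by simp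
    have Z: "ac (Cs s u) e1 = ac (CtB t u) e2'" if u: "u \<in> P1 n s" "u \<in> P2 n t" for u
    proof -
      have LC: "CtB t u \<in> Lambda n" using CtB_Lambda u(2) .
      have "mvec n (CtB t u) y = sc (y t) (sc (xpow (-1)) u)" by (rule mvec_CtB[OF tn])
      hence y2: "mvec n (CtB t u) y = sc h u"
        by (simp add: y_def sv_def sc_def xpow_1_inv mult.assoc)
      have "ac (CtB t u) e2' = ac (CtB t u) e2 \<oplus> i (sc h u)"
        unfolding e2'_def using acadd[OF LC e2(1) iC[OF yN]] iact[OF LC yN] y2 by simp
      thus ?thesis using h[OF u] by simp
    qed
    show ?thesis by (rule split_given[OF e1 e2'C pe2' Z])
  qed
qed

end

lemma no_ext:
  assumes st: "1 \<le> s" "s < t" "t \<le> n" "1 \<le> s'" "s' < t'" "t' \<le> n" and nilv: "\<not> ilv s t s' t'"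
  shows "\<not> ext1_nonzero n (lat_mod n s t :: ('k::field vec, 'k mat) lmod) (lat_mod n s' t')"
proof
  assume "ext1_nonzero n (lat_mod n s t :: ('k::field vec, 'k mat) lmod) (lat_mod n s' t')"
  then obtain E :: "('k vec \<times> 'k vec, 'k mat) lmod" and i p where
    H: "is_lmod n E" "lhom n (lat_mod n s' t') E i" "inj_on i (lcarrier (lat_mod n s' t'))"
       "lhom n E (lat_mod n s t) p" "p ` lcarrier E = lcarrier (lat_mod n s t)"
       "i ` lcarrier (lat_mod n s' t') = {e \<in> lcarrier E. p e = lzero (lat_mod n s t)}"
       "\<not> (\<exists>\<sigma>. lhom n (lat_mod n s t) E \<sigma> \<and> (\<forall>m\<in>lcarrier (lat_mod n s t). p (\<sigma> m) = m))"
    unfolding ext1_nonzero_def by blast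
  interpret extctx n s t s' t' E i p
    using st H by (unfold_locales) (simp_all add: lat_mod_def)
  show False using splitA[OF nilv] H(7) by blast
qed




definition CEx :: "nat \<Rightarrow> nat \<Rightarrow> nat \<Rightarrow> nat \<Rightarrow> nat \<Rightarrow> 'k::field poly fract \<Rightarrow> ('k vec \<times> 'k vec) set" where
  "CEx n s t s' t' h = {e. \<exists>a w. a \<in> P1 n s \<and> w \<in> P2 n t \<and> snd e = (\<lambda>j. a j + w j) \<and>
                           (\<lambda>j. fst e j - h * a j) \<in> lattice_st n s' t'}"

definition Ex :: "nat \<Rightarrow> nat \<Rightarrow> nat \<Rightarrow> nat \<Rightarrow> nat \<Rightarrow> 'k::field poly fract \<Rightarrow> ('k vec \<times> 'k vec, 'k mat) lmod" where
  "Ex n s t s' t' h = \<lparr>lcarrier = CEx n s t s' t' h,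
     ladd = (\<lambda>e e'. (\<lambda>j. fst e j + fst e' j, \<lambda>j. snd e j + snd e' j)),
     lzero = (\<lambda>j. 0, \<lambda>j. 0),
     lact = (\<lambda>B e. (mvec n B (fst e), mvec n B (snd e)))\<rparr>"

lemma ext_exists:
  fixes n s t s' t' :: nat
  assumes st: "1 \<le> s" "s < t" "t \<le> n" "1 \<le> s'" "s' < t'" "t' \<le> n" and lv: "ilv s t s' t'"
  shows "ext1_nonzero n (lat_mod n s t :: ('k::field vec, 'k mat) lmod) (lat_mod n s' t')"
proof -
  define k where "k = min (dexp s' t' s) (dexp s' t' t - 1) - 1"
  define h :: "'k poly fract" where "h = xpow k"
  let ?M = "lattice_st n s t :: 'k vec set"
  let ?N = "lattice_st n s' t' :: 'k vec set"
  define C where "C = CEx n s t s' t' h"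
  define E where "E = Ex n s t s' t' h"
  have n2: "2 \<le> n" and sn: "s \<in> {1..n}" and tn: "t \<in> {1..n}" using st by auto
  have hOm: "(\<lambda>j. h * a j) \<in> ?N" if a: "a \<in> P1 n s" "a \<in> P2 n t" for a
  proof (rule lattice_stI)
    show "vsupp n (\<lambda>j. h * a j)" using a P1_iff[OF sn] unfolding vsupp_def by auto
    fix j assume j: "j \<in> {1..n}"
    have 1: "inxR (k + cexp n j s) (h * a j)" using a P1_iff[OF sn] j inxR_mult[OF inxR_xpow] h_def by blast
    have 2: "inxR (k + (cexp n j t + 1)) (h * a j)" using a P2_iff[OF tn] j inxR_mult[OF inxR_xpow] h_def by blast
    from combB[OF st lv j] show "inxR (dexp s' t' j) (h * a j)"
      using 1 2 inxR_mono unfolding k_def by (metis add.assoc)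
  qed
  have CI: "e \<in> C" if "a \<in> P1 n s" "w \<in> P2 n t" "snd e = (\<lambda>j. a j + w j)"
      "(\<lambda>j. fst e j - h * a j) \<in> ?N" for e a w
    using that unfolding C_def CEx_def by blast
  have Nmv: "mvec n B y \<in> ?N" if "B \<in> Lambda n" "y \<in> ?N" for B y using lattice_mvec st that by blast
  have CEsupp: "vsupp n (fst e) \<and> vsupp n (snd e)" if eC: "e \<in> C" for e
  proof -
    obtain a w where aw: "a \<in> P1 n s" "w \<in> P2 n t" "snd e = (\<lambda>j. a j + w j)"
      "(\<lambda>j. fst e j - h * a j) \<in> ?N" using eC unfolding C_def CEx_def by blast
    have "vsupp n a" "vsupp n w" using aw P1_iff[OF sn] P2_iff[OF tn] by auto
    moreover have "vsupp n (\<lambda>j. fst e j - h * a j)" using lattice_stD aw(4) by blast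
    ultimately show ?thesis using aw(3) unfolding vsupp_def by auto
  qed
  have EC: "lcarrier E = C" "ladd E = (\<lambda>e e'. (\<lambda>j. fst e j + fst e' j, \<lambda>j. snd e j + snd e' j))"
     "lzero E = (\<lambda>j. 0, \<lambda>j. 0)" "lact E = (\<lambda>B e. (mvec n B (fst e), mvec n B (snd e)))"
    unfolding E_def Ex_def C_def by simp_all
  have Cadd: "(\<lambda>j. fst e j + fst e' j, \<lambda>j. snd e j + snd e' j) \<in> C" if eC: "e \<in> C" "e' \<in> C" for e e'
  proof -
    obtain a w where aw: "a \<in> P1 n s" "w \<in> P2 n t" "snd e = (\<lambda>j. a j + w j)"
      "(\<lambda>j. fst e j - h * a j) \<in> ?N" using eC(1) unfolding C_def CEx_def by blast
    obtain a' w' where aw': "a' \<in> P1 n s" "w' \<in> P2 n t" "snd e' = (\<lambda>j. a' j + w' j)"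
      "(\<lambda>j. fst e' j - h * a' j) \<in> ?N" using eC(2) unfolding C_def CEx_def by blast
    have "(\<lambda>j. (fst e j - h * a j) + (fst e' j - h * a' j)) \<in> ?N" using lattice_add[OF aw(4) aw'(4)] by simp
    moreover have "(\<lambda>j. (fst e j - h * a j) + (fst e' j - h * a' j)) = (\<lambda>j. (fst e j + fst e' j) - h * (a j + a' j))"
      by (auto simp: algebra_simps)
    ultimately show ?thesis using aw aw'
      by (intro CI[OF P1_add[OF sn aw(1) aw'(1)] P2_add[OF tn aw(2) aw'(2)]]) (auto simp: algebra_simps)
  qed
  have Czero: "(\<lambda>j. 0, \<lambda>j. 0) \<in> C"
    by (rule CI[OF P1_zero[OF sn] P2_zero[OF tn]]) (auto simp: lattice_zero)
  have Cneg: "(\<lambda>j. - fst e j, \<lambda>j. - snd e j) \<in> C" if eC: "e \<in> C" for e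
  proof -
    obtain a w where aw: "a \<in> P1 n s" "w \<in> P2 n t" "snd e = (\<lambda>j. a j + w j)"
      "(\<lambda>j. fst e j - h * a j) \<in> ?N" using eC unfolding C_def CEx_def by blast
    have "(\<lambda>j. - (fst e j - h * a j)) \<in> ?N" using lattice_uminus[OF aw(4)] by simp
    moreover have "(\<lambda>j. - (fst e j - h * a j)) = (\<lambda>j. - fst e j - h * (- a j))" by (auto simp: algebra_simps)
    ultimately show ?thesis using aw
      by (intro CI[OF P1_uminus[OF sn aw(1)] P2_uminus[OF tn aw(2)]]) (auto simp: algebra_simps)
  qed
  have Cact: "(mvec n B (fst e), mvec n B (snd e)) \<in> C" if B: "B \<in> Lambda n" and e: "e \<in> C" for B e
  proof -
    obtain a w where aw: "a \<in> P1 n s" "w \<in> P2 n t" "snd e = (\<lambda>j. a j + w j)"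
      "(\<lambda>j. fst e j - h * a j) \<in> ?N" using e unfolding C_def CEx_def by blast
    have "mvec n B (\<lambda>j. fst e j - h * a j) = (\<lambda>j. mvec n B (fst e) j - h * mvec n B a j)"
      using mvec_diff[of n B "fst e" "sc h a"] mvec_sc[of n B h a] by (simp add: sc_def)
    hence "(\<lambda>j. mvec n B (fst e) j - h * mvec n B a j) \<in> ?N" using Nmv[OF B aw(4)] by simp
    moreover have "mvec n B (snd e) = (\<lambda>j. mvec n B a j + mvec n B w j)" using aw(3) mvec_add by simp
    ultimately show ?thesis by (intro CI[OF P1_mvec[OF n2 B aw(1)] P2_mvec[OF n2 B aw(2)]]) auto
  qed
  have Emod: "is_lmod n E"
    unfolding is_lmod_def Let_def EC
    apply (intro conjI ballI)
    subgoal by (rule Cadd)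
    subgoal by (rule Czero)
    subgoal by (simp add: add.assoc)
    subgoal by (simp add: add.commute)
    subgoal by simp
    subgoal for a using Cneg by (intro bexI[of _ "(\<lambda>j. - fst a j, \<lambda>j. - snd a j)"]) auto
    subgoal by (rule Cact)
    subgoal by (simp add: mvec_add)
    subgoal by (simp add: mvec_madd)
    subgoal by (simp add: mvec_mmul)
    subgoal for a using CEsupp mvec_mone by (metis prod.collapse)
    done
  define ii :: "'k vec \<Rightarrow> 'k vec \<times> 'k vec" where "ii y = (y, \<lambda>j. 0)" for y
  define pp :: "'k vec \<times> 'k vec \<Rightarrow> 'k vec" where "pp = snd"
  have iiC: "ii y \<in> C" if y: "y \<in> ?N" for y
    by (rule CI[OF P1_zero[OF sn] P2_zero[OF tn]]) (auto simp: ii_def y)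
  have ihom: "lhom n (lat_mod n s' t') E ii"
    unfolding lhom_def EC using iiC by (auto simp: lat_mod_def ii_def mvec_zero)
  have iinj: "inj_on ii (lcarrier (lat_mod n s' t'))" unfolding inj_on_def ii_def by simp
  have sndM: "snd e \<in> ?M" if eC: "e \<in> C" for e
  proof -
    obtain a w where aw: "a \<in> P1 n s" "w \<in> P2 n t" "snd e = (\<lambda>j. a j + w j)"
      using eC unfolding C_def CEx_def by blast
    show ?thesis unfolding aw(3) by (rule lattice_add[OF P1_lat[OF st(1-3) aw(1)] P2_lat[OF st(1-3) aw(2)]])
  qed
  have phom: "lhom n E (lat_mod n s t) pp"
    unfolding lhom_def EC using sndM by (auto simp: lat_mod_def pp_def)
  have psurj: "pp ` lcarrier E = lcarrier (lat_mod n s t)"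
  proof
    show "pp ` lcarrier E \<subseteq> lcarrier (lat_mod n s t)" using sndM by (auto simp: EC pp_def lat_mod_def)
    show "lcarrier (lat_mod n s t) \<subseteq> pp ` lcarrier E"
    proof
      fix m :: "'k vec" assume "m \<in> lcarrier (lat_mod n s t)"
      hence m: "m \<in> ?M" by (simp add: lat_mod_def)
      have "(\<lambda>j. h * dA s t m j, m) \<in> C"
        by (rule CI[OF dA_P1[OF st(1-3) m] dW_P2[OF st(1-3) m]]) (auto simp: dA_dW' lattice_zero)
      thus "m \<in> pp ` lcarrier E" unfolding EC pp_def by (metis image_eqI snd_conv)
    qed
  qed
  have exact: "ii ` lcarrier (lat_mod n s' t') = {e \<in> lcarrier E. pp e = lzero (lat_mod n s t)}"
  proof
    show "ii ` lcarrier (lat_mod n s' t') \<subseteq> {e \<in> lcarrier E. pp e = lzero (lat_mod n s t)}"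
      using iiC by (auto simp: lat_mod_def EC pp_def ii_def)
    show "{e \<in> lcarrier E. pp e = lzero (lat_mod n s t)} \<subseteq> ii ` lcarrier (lat_mod n s' t')"
    proof
      fix e assume "e \<in> {e \<in> lcarrier E. pp e = lzero (lat_mod n s t)}"
      hence eC: "e \<in> C" and e0: "snd e = (\<lambda>j. 0)" by (auto simp: EC pp_def lat_mod_def)
      obtain a w where aw: "a \<in> P1 n s" "w \<in> P2 n t" "snd e = (\<lambda>j. a j + w j)"
        "(\<lambda>j. fst e j - h * a j) \<in> ?N" using eC unfolding C_def CEx_def by blast
      have "a = (\<lambda>j. - w j)"
      proof
        fix j have "a j + w j = 0" using fun_cong[OF trans[OF aw(3)[symmetric] e0], of j] by simp
        thus "a j = - w j" by (simp add: eq_neg_iff_add_eq_0)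
      qed
      hence aP2: "a \<in> P2 n t" using P2_uminus[OF tn aw(2)] by simp
      have "(\<lambda>j. (fst e j - h * a j) + h * a j) \<in> ?N" using lattice_add[OF aw(4) hOm[OF aw(1) aP2]] .
      hence "fst e \<in> ?N" by simp
      moreover have "e = ii (fst e)" using e0 by (simp add: ii_def prod_eq_iff)
      ultimately show "e \<in> ii ` lcarrier (lat_mod n s' t')" by (simp add: lat_mod_def)
    qed
  qed
  have nosplit: "\<not> (\<exists>\<sigma>. lhom n (lat_mod n s t) E \<sigma> \<and> (\<forall>m\<in>lcarrier (lat_mod n s t). pp (\<sigma> m) = m))"
  proof
    assume "\<exists>\<sigma>. lhom n (lat_mod n s t) E \<sigma> \<and> (\<forall>m\<in>lcarrier (lat_mod n s t). pp (\<sigma> m) = m)"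
    then obtain \<sigma> where sh: "lhom n (lat_mod n s t) E \<sigma>" and sp: "\<And>m. m \<in> ?M \<Longrightarrow> snd (\<sigma> m) = m"
      by (auto simp: lat_mod_def pp_def)
    have sC: "\<And>m. m \<in> ?M \<Longrightarrow> \<sigma> m \<in> C" and
      sact: "\<And>B m. B \<in> Lambda n \<Longrightarrow> m \<in> ?M \<Longrightarrow> \<sigma> (mvec n B m) = (mvec n B (fst (\<sigma> m)), mvec n B (snd (\<sigma> m)))"
      using sh unfolding lhom_def EC by (auto simp: lat_mod_def)
    have "\<exists>g. \<forall>m\<in>?M. fst (\<sigma> m) = sc g m"
    proof (rule scalar_lemma[where e = "dexp s t"])
      show "1 \<le> n" using st by simp
      show "vsupp n u" if "u \<in> ?M" for u using lattice_stD that by blast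
      show "mvec n B u \<in> ?M" if "B \<in> Lambda n" "u \<in> ?M" for B u using lattice_mvec st that by blast
      show "sv j (xpow (dexp s t j)) \<in> ?M" if j: "j \<in> {1..n}" for j
      proof (rule lattice_stI)
        show "vsupp n (sv j (xpow (dexp s t j) :: 'k poly fract))" by (rule vsupp_sv[OF j])
        show "inxR (dexp s t i) (sv j (xpow (dexp s t j)) i)" for i
          by (simp add: sv_def inxR_xpow)
      qed
      show "inxR (dexp s t j) (u j)" if "u \<in> ?M" "j \<in> {1..n}" for u j using lattice_stD that by blast
      show "fst (\<sigma> (mvec n B u)) = mvec n B (fst (\<sigma> u))" if "B \<in> Lambda n" "u \<in> ?M" for B u
        using sact[OF that] by simp
      show "vsupp n (fst (\<sigma> u))" if "u \<in> ?M" for u using CEsupp sC that by blast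
    qed
    then obtain g where g: "\<And>m. m \<in> ?M \<Longrightarrow> fst (\<sigma> m) = sc g m" by blast
    have sig: "\<sigma> m = (sc g m, m)" if "m \<in> ?M" for m using g[OF that] sp[OF that] by (simp add: prod_eq_iff)
    define m1 :: "'k vec" where "m1 = sv s 1"
    have m1P: "m1 \<in> P1 n s" unfolding m1_def by (rule sv_s_P1[OF n2 sn])
    have m1M: "m1 \<in> ?M" using P1_lat[OF st(1-3) m1P] .
    have "(sc g m1, m1) \<in> C" using sC[OF m1M] sig[OF m1M] by simp
    then obtain a w where aw: "a \<in> P1 n s" "w \<in> P2 n t" "m1 = (\<lambda>j. a j + w j)"
      "(\<lambda>j. sc g m1 j - h * a j) \<in> ?N" unfolding C_def CEx_def by auto
    have wdef: "w = (\<lambda>j. m1 j - a j)" using aw(3) by (auto simp: fun_eq_iff)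
    have wP1: "w \<in> P1 n s" unfolding wdef by (rule P1_diff[OF sn m1P aw(1)])
    have "(\<lambda>j. (sc g m1 j - h * a j) - h * w j) \<in> ?N" using lattice_diff[OF aw(4) hOm[OF wP1 aw(2)]] .
    hence "inxR (dexp s' t' s) ((sc g m1 s - h * a s) - h * w s)" using lattice_stD sn by blast
    hence X: "inxR (dexp s' t' s) (g - (h * a s + h * w s))"
      by (simp add: sc_def m1_def sv_def algebra_simps)
    have "a s + w s = 1" using fun_cong[OF aw(3), of s] by (simp add: m1_def sv_def)
    hence "h * a s + h * w s = h" by (metis distrib_left mult.right_neutral)
    hence gh: "inxR (dexp s' t' s) (g - h)" using X by simp
    define m2 :: "'k vec" where "m2 = sv t (xpow 1)"
    have m2P: "m2 \<in> P2 n t" unfolding m2_def by (rule sv_t_P2[OF n2 tn])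
    have m2M: "m2 \<in> ?M" using P2_lat[OF st(1-3) m2P] .
    have "(sc g m2, m2) \<in> C" using sC[OF m2M] sig[OF m2M] by simp
    then obtain a2 w2 where aw2: "a2 \<in> P1 n s" "w2 \<in> P2 n t" "m2 = (\<lambda>j. a2 j + w2 j)"
      "(\<lambda>j. sc g m2 j - h * a2 j) \<in> ?N" unfolding C_def CEx_def by auto
    have adef: "a2 = (\<lambda>j. m2 j - w2 j)" using aw2(3) by (auto simp: fun_eq_iff)
    have aP2: "a2 \<in> P2 n t" unfolding adef by (rule P2_diff[OF tn m2P aw2(2)])
    have "(\<lambda>j. (sc g m2 j - h * a2 j) + h * a2 j) \<in> ?N" using lattice_add[OF aw2(4) hOm[OF aw2(1) aP2]] .
    hence "inxR (dexp s' t' t) (g * xpow 1)" using lattice_stD tn by (fastforce simp: sc_def m2_def sv_def)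
    hence "inxR (dexp s' t' t - 1 + 1) (g * xpow 1)" by simp
    hence gt: "inxR (dexp s' t' t - 1) g" using inxR_shift by blast
    have "inxR (k + 1) (g - h)" using gh inxR_mono unfolding k_def by fastforce
    moreover have "inxR (k + 1) g" using gt inxR_mono unfolding k_def by fastforce
    ultimately have "inxR (k + 1) (g - (g - h))" using inxR_diff by blast
    hence "inxR (k + 1) (xpow k :: 'k poly fract)" by (simp add: h_def)
    thus False using not_inxR by blast
  qed
  show ?thesis unfolding ext1_nonzero_def
    using Emod ihom iinj phom psurj exact nosplit by blast
qed

lemma ilv_sym: "ilv s t s' t' \<longleftrightarrow> ilv s' t' s t" unfolding ilv_def by auto

lemma ext_iff:
  assumes "1 \<le> s" "s < t" "t \<le> n" "1 \<le> s'" "s' < t'" "t' \<le> n"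
  shows "ext1_nonzero n (lat_mod n s t :: ('k::field vec, 'k mat) lmod) (lat_mod n s' t') \<longleftrightarrow> ilv s t s' t'"
  using ext_exists[OF assms] no_ext[OF assms] by blast

lemma cross_iff:
  assumes "1 \<le> s" "s < t" "t \<le> n" "1 \<le> s'" "s' < t'" "t' \<le> n"
  shows "crossing_diagonals n s t s' t' \<longleftrightarrow> ilv s t s' t'"
  using assms unfolding crossing_diagonals_def is_diagonal_def ilv_def by auto

theorem proposition3p11:
  fixes n s t s' t' :: nat
  assumes "1 \<le> s" "s < t" "t \<le> n" "1 \<le> s'" "s' < t'" "t' \<le> n"
  shows "(ext1_nonzero n (lat_mod n s t :: ('k::field vec, 'k mat) lmod) (lat_mod n s' t')
            \<longleftrightarrow> ext1_nonzero n (lat_mod n s' t' :: ('k vec, 'k mat) lmod) (lat_mod n s t)) \<and>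
         (ext1_nonzero n (lat_mod n s' t' :: ('k vec, 'k mat) lmod) (lat_mod n s t)
            \<longleftrightarrow> crossing_diagonals n s t s' t')"
proof -
  have 1: "ext1_nonzero n (lat_mod n s t :: ('k::field vec, 'k mat) lmod) (lat_mod n s' t') \<longleftrightarrow> ilv s t s' t'"
    using ext_iff assms by blast
  have 2: "ext1_nonzero n (lat_mod n s' t' :: ('k vec, 'k mat) lmod) (lat_mod n s t) \<longleftrightarrow> ilv s' t' s t"
    using ext_iff assms by blast
  show ?thesis using 1 2 ilv_sym cross_iff[OF assms] by blast
qed


end
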